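(* Let $\beta>1$, $\mathbf{L}\in Q^2(\mathbb{D}^2)$, and let $F\colon\mathbb{D}^2\to\mathbb{C}$ be analytic. Suppose there exists $p\in\mathbb{Z}_+$ such that for every $d\in(0,\beta]$ there exists $\eta(d)\in(0,d)$ such that for each $z^0\in\mathbb{D}^2$ there are $R=(r_1,r_2)$ with $r_j=r_j(d,z^0)\in(\eta(d),d)$, $j=1,2$, and $k^0=k^0(d,z^0)\le p$ such that the polynomial $p_{k^0}$ is a main polynomial in the diagonal power expansion of $F$ at $z^0$ on $\mathbb{T}^2\big(z^0,\frac{R}{\mathbf{L}(z^0)}\big)$. Then $F$ has bounded $\mathbf{L}$-index in joint variables.
   Context: $\mathbb{D}^2=\{(z_1,z_2)\in\mathbb{C}^2:|z_1|<1,|z_2|<1\}$, $\mathbb{Z}_+=\{0,1,2,\dots\}$, $\mathbb{R}_+=[0,\infty)$. $\mathbf{L}(z)=(l_1(z),l_2(z))$, where each $l_j\colon\mathbb{D}^2\to\mathbb{R}_+$ is continuous and satisfies $l_j(z_1,z_2)>\beta/(1-|z_j|)$ for all $(z_1,z_2)\in\mathbb{D}^2$, $j=1,2$. For $z^0\in\mathbb{C}^2$ and $R=(r_1,r_2)\in\mathbb{R}_+^2$: $\mathbb{D}^2[z^0,R]=\{z:|z_j-z_j^0|\le r_j,\ j=1,2\}$, $\mathbb{T}^2(z^0,R)=\{z:|z_j-z_j^0|=r_j,\ j=1,2\}$, $\frac{R}{\mathbf{L}(z^0)}=\big(\frac{r_1}{l_1(z^0)},\frac{r_2}{l_2(z^0)}\big)$.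 $F^{(p,q)}=\frac{\partial^{p+q}F}{\partial z_1^p\partial z_2^q}$. An analytic $F\colon\mathbb{D}^2\to\mathbb{C}$ has bounded $\mathbf{L}$-index in joint variables if there is $n_0\in\mathbb{Z}_+$ such that for all $z\in\mathbb{D}^2$ and all $(p_1,p_2)\in\mathbb{Z}_+^2$: $\frac{|F^{(p_1,p_2)}(z)|}{p_1!p_2!\,l_1^{p_1}(z)l_2^{p_2}(z)}\le\max\{\frac{|F^{(k_1,k_2)}(z)|}{k_1!k_2!\,l_1^{k_1}(z)l_2^{k_2}(z)}:0\le k_1+k_2\le n_0\}$. $Q^2(\mathbb{D}^2)$ is the class of such $\mathbf{L}$ for which, for all $R=(r_1,r_2)\in[0,\beta]^2$ and $j=1,2$, $0<\lambda_{1,j}(R)\le\lambda_{2,j}(R)<\infty$, where $\lambda_{1,j}(R)=\inf_{z^0\in\mathbb{D}^2}\inf\{l_j(z)/l_j(z^0): z\in\mathbb{D}^2[z^0,R/\mathbf{L}(z^0)]\}$ and $\lambda_{2,j}(R)=\sup_{z^0\in\mathbb{D}^2}\sup\{l_j(z)/l_j(z^0): z\in\mathbb{D}^2[z^0,R/\mathbf{L}(z^0)]\}$. Diagonal power expansion: for $z^0\in\mathbb{D}^2$ write $F(z)=\sum_{k=0}^\infty p_k(z_1-z_1^0,z_2-z_2^0)$, where $p_k(w_1,w_2)=\sum_{j_1+j_2=k}b_{j_1,j_2}w_1^{j_1}w_2^{j_2}$ and $b_{j_1,j_2}=\frac{F^{(j_1,j_2)}(z^0)}{j_1!j_2!}$.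 For $R=(r_1,r_2)$, the polynomial $p_{k^0}$ ($k^0\in\mathbb{Z}_+$) is a main polynomial of this expansion on $\mathbb{T}^2(z^0,R)$ if for every $z\in\mathbb{T}^2(z^0,R)$: $\big|\sum_{k\ne k^0}p_k(z_1-z_1^0,z_2-z_2^0)\big|\le\frac12\max\{|b_{j_1,j_2}|r_1^{j_1}r_2^{j_2}: j_1+j_2=k^0\}$. *)

theory Defs
  imports "HOL-Complex_Analysis.Complex_Analysis"
begin

definition bidisc :: "(complex \<times> complex) set" where
  "bidisc = {z. cmod (fst z) < 1 \<and> cmod (snd z) < 1}"

text \<open>Analyticity (holomorphy) in two variables: complex Frechet differentiability
  at every point of the bidisc, with complex-linear derivative.\<close>
definition analytic2 :: "(complex \<times> complex \<Rightarrow> complex) \<Rightarrow> bool" where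
  "analytic2 F \<longleftrightarrow> (\<forall>z\<in>bidisc. \<exists>D. (F has_derivative D) (at z) \<and>
       (\<forall>c::complex. \<forall>v. D (c * fst v, c * snd v) = c * D v))"

definition pderiv2 :: "(complex \<times> complex \<Rightarrow> complex) \<Rightarrow> nat \<Rightarrow> nat \<Rightarrow> complex \<times> complex \<Rightarrow> complex" where
  "pderiv2 F p q z =
     (deriv ^^ p) (\<lambda>w1. (deriv ^^ q) (\<lambda>w2. F (w1, w2)) (snd z)) (fst z)"

definition cpolydisc :: "complex \<times> complex \<Rightarrow> real \<times> real \<Rightarrow> (complex \<times> complex) set" where
  "cpolydisc z0 R = {z. cmod (fst z - fst z0) \<le> fst R \<and> cmod (snd z - snd z0) \<le> snd R}"

definition torus2 :: "complex \<times> complex \<Rightarrow> real \<times> real \<Rightarrow> (complex \<times> complex) set" where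
  "torus2 z0 R = {z. cmod (fst z - fst z0) = fst R \<and> cmod (snd z - snd z0) = snd R}"

definition divL :: "real \<times> real \<Rightarrow> (complex \<times> complex \<Rightarrow> real) \<Rightarrow> (complex \<times> complex \<Rightarrow> real)
    \<Rightarrow> complex \<times> complex \<Rightarrow> real \<times> real" where
  "divL R l1 l2 z0 = (fst R / l1 z0, snd R / l2 z0)"

definition lambda1 :: "(complex \<times> complex \<Rightarrow> real) \<Rightarrow> (complex \<times> complex \<Rightarrow> real)
    \<Rightarrow> (complex \<times> complex \<Rightarrow> real) \<Rightarrow> real \<times> real \<Rightarrow> ereal" where
  "lambda1 l l1 l2 R = (INF z0\<in>bidisc. INF z\<in>cpolydisc z0 (divL R l1 l2 z0). ereal (l z / l z0))"

definition lambda2 :: "(complex \<times> complex \<Rightarrow> real) \<Rightarrow> (complex \<times> complex \<Rightarrow> real)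
    \<Rightarrow> (complex \<times> complex \<Rightarrow> real) \<Rightarrow> real \<times> real \<Rightarrow> ereal" where
  "lambda2 l l1 l2 R = (SUP z0\<in>bidisc. SUP z\<in>cpolydisc z0 (divL R l1 l2 z0). ereal (l z / l z0))"

definition admissibleL :: "real \<Rightarrow> (complex \<times> complex \<Rightarrow> real) \<Rightarrow> (complex \<times> complex \<Rightarrow> real) \<Rightarrow> bool" where
  "admissibleL \<beta> l1 l2 \<longleftrightarrow>
     continuous_on bidisc l1 \<and> continuous_on bidisc l2 \<and>
     (\<forall>z\<in>bidisc. l1 z \<ge> 0 \<and> l2 z \<ge> 0 \<and>
        l1 z > \<beta> / (1 - cmod (fst z)) \<and> l2 z > \<beta> / (1 - cmod (snd z)))"

definition Q2 :: "real \<Rightarrow> (complex \<times> complex \<Rightarrow> real) \<Rightarrow> (complex \<times> complex \<Rightarrow> real) \<Rightarrow> bool" where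
  "Q2 \<beta> l1 l2 \<longleftrightarrow> admissibleL \<beta> l1 l2 \<and>
     (\<forall>r1 r2. 0 \<le> r1 \<and> r1 \<le> \<beta> \<and> 0 \<le> r2 \<and> r2 \<le> \<beta> \<longrightarrow>
        (\<forall>l\<in>{l1, l2}. 0 < lambda1 l l1 l2 (r1, r2) \<and>
            lambda1 l l1 l2 (r1, r2) \<le> lambda2 l l1 l2 (r1, r2) \<and>
            lambda2 l l1 l2 (r1, r2) < \<infinity>))"

definition nterm :: "(complex \<times> complex \<Rightarrow> complex) \<Rightarrow> (complex \<times> complex \<Rightarrow> real)
    \<Rightarrow> (complex \<times> complex \<Rightarrow> real) \<Rightarrow> complex \<times> complex \<Rightarrow> nat \<Rightarrow> nat \<Rightarrow> real" where
  "nterm F l1 l2 z p q = cmod (pderiv2 F p q z) / (fact p * fact q * l1 z ^ p * l2 z ^ q)"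

definition bounded_L_index_joint :: "(complex \<times> complex \<Rightarrow> complex) \<Rightarrow> (complex \<times> complex \<Rightarrow> real)
    \<Rightarrow> (complex \<times> complex \<Rightarrow> real) \<Rightarrow> bool" where
  "bounded_L_index_joint F l1 l2 \<longleftrightarrow>
     (\<exists>n0::nat. \<forall>z\<in>bidisc. \<forall>p1 p2.
        nterm F l1 l2 z p1 p2 \<le> Max ((\<lambda>(k1, k2). nterm F l1 l2 z k1 k2) ` {(k1, k2). k1 + k2 \<le> n0}))"

definition bcoef :: "(complex \<times> complex \<Rightarrow> complex) \<Rightarrow> complex \<times> complex \<Rightarrow> nat \<Rightarrow> nat \<Rightarrow> complex" where
  "bcoef F z0 j1 j2 = pderiv2 F j1 j2 z0 / (fact j1 * fact j2)"

definition hpoly :: "(complex \<times> complex \<Rightarrow> complex) \<Rightarrow> complex \<times> complex \<Rightarrow> nat \<Rightarrow> complex \<times> complex \<Rightarrow> complex" where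
  "hpoly F z0 k w = (\<Sum>j1\<le>k. bcoef F z0 j1 (k - j1) * fst w ^ j1 * snd w ^ (k - j1))"

definition main_polynomial :: "(complex \<times> complex \<Rightarrow> complex) \<Rightarrow> complex \<times> complex \<Rightarrow> real \<times> real \<Rightarrow> nat \<Rightarrow> bool" where
  "main_polynomial F z0 R k0 \<longleftrightarrow>
     (\<forall>z\<in>torus2 z0 R.
        cmod (\<Sum>k. if k = k0 then 0 else hpoly F z0 k (fst z - fst z0, snd z - snd z0))
          \<le> 1/2 * Max ((\<lambda>j1. cmod (bcoef F z0 j1 (k0 - j1)) * fst R ^ j1 * snd R ^ (k0 - j1)) ` {..k0}))"

end

theory Submission
  imports Defs
begin


lemma bidisc_iff: "z \<in> bidisc \<longleftrightarrow> cmod (fst z) < 1 \<and> cmod (snd z) < 1"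
  by (simp add: bidisc_def)

lemma analytic2_cont:
  assumes "analytic2 F" shows "continuous_on bidisc F"
proof -
  have "\<forall>z\<in>bidisc. isCont F z"
    using assms unfolding analytic2_def by (meson has_derivative_continuous)
  then show ?thesis by (simp add: continuous_at_imp_continuous_on)
qed

lemma analytic2_hol2:
  assumes "analytic2 F" "cmod a < 1"
  shows "(\<lambda>y. F (a, y)) holomorphic_on ball 0 1"
proof -
  have "(\<lambda>y. F (a, y)) field_differentiable at b" if b: "cmod b < 1" for b
  proof -
    have "(a,b) \<in> bidisc" using assms b by (simp add: bidisc_def)
    then obtain D where D: "(F has_derivative D) (at (a,b))"
      and lin: "\<forall>c::complex. \<forall>v. D (c * fst v, c * snd v) = c * D v"
      using assms(1) unfolding analytic2_def by blast
    have P: "((\<lambda>y. (a, y)) has_derivative (\<lambda>h. (0, h))) (at b)"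
      by (auto intro!: derivative_eq_intros)
    have "((\<lambda>y. F (a, y)) has_derivative (\<lambda>h. D (0, h))) (at b)"
      using has_derivative_compose[OF P, of F D] D by (simp add: o_def)
    moreover have "(\<lambda>h. D (0, h)) = (\<lambda>h. D (0,1) * h)"
    proof
      fix h :: complex show "D (0, h) = D (0,1) * h" using lin[rule_format, of h "(0,1)"] by (simp add: mult.commute)
    qed
    ultimately have "((\<lambda>y. F (a, y)) has_field_derivative D (0,1)) (at b)"
      by (simp add: has_field_derivative_def)
    then show ?thesis using field_differentiable_def by blast
  qed
  then show ?thesis
    by (simp add: holomorphic_on_open field_differentiable_def)
qed

lemma analytic2_hol1:
  assumes "analytic2 F" "cmod b < 1"
  shows "(\<lambda>x. F (x, b)) holomorphic_on ball 0 1"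
proof -
  have "(\<lambda>x. F (x, b)) field_differentiable at a" if a: "cmod a < 1" for a
  proof -
    have "(a,b) \<in> bidisc" using assms a by (simp add: bidisc_def)
    then obtain D where D: "(F has_derivative D) (at (a,b))"
      and lin: "\<forall>c::complex. \<forall>v. D (c * fst v, c * snd v) = c * D v"
      using assms(1) unfolding analytic2_def by blast
    have P: "((\<lambda>x. (x, b)) has_derivative (\<lambda>h. (h, 0))) (at a)"
      by (auto intro!: derivative_eq_intros)
    have "((\<lambda>x. F (x, b)) has_derivative (\<lambda>h. D (h, 0))) (at a)"
      using has_derivative_compose[OF P, of F D] D by (simp add: o_def)
    moreover have "(\<lambda>h. D (h, 0)) = (\<lambda>h. D (1,0) * h)"
    proof
      fix h :: complex show "D (h, 0) = D (1,0) * h" using lin[rule_format, of h "(1,0)"] by (simp add: mult.commute)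
    qed
    ultimately have "((\<lambda>x. F (x, b)) has_field_derivative D (1,0)) (at a)"
      by (simp add: has_field_derivative_def)
    then show ?thesis using field_differentiable_def by blast
  qed
  then show ?thesis
    by (simp add: holomorphic_on_open field_differentiable_def)
qed



lemma param_cont:
  fixes H :: "'a::topological_space \<Rightarrow> complex \<Rightarrow> complex" and g :: "real \<Rightarrow> complex"
  assumes cont: "continuous_on (U \<times> path_image g) (\<lambda>(x,y). H x y)"
    and pg: "path g" and dg: "continuous_on {0..1} (\<lambda>t. vector_derivative g (at t))"
  shows "continuous_on U (\<lambda>x. contour_integral g (H x))"
proof -
  have gc: "continuous_on {0..1} g" using pg by (simp add: path_def)
  have c0: "continuous_on (U \<times> {0..1}) (\<lambda>z. (fst z, g (snd z)))"
    by (intro continuous_intros continuous_on_compose2[OF gc]) auto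
  have c1: "continuous_on (U \<times> {0..1}) (\<lambda>z. (\<lambda>(x,y). H x y) (fst z, g (snd z)))"
    by (rule continuous_on_compose2[OF cont c0]) (auto simp: path_image_def)
  have c2: "continuous_on (U \<times> {0..1}) (\<lambda>z. vector_derivative g (at (snd z)))"
    by (intro continuous_on_compose2[OF dg] continuous_intros) auto
  have "continuous_on (U \<times> cbox 0 1) (\<lambda>(x, t). H x (g t) * vector_derivative g (at t))"
    using continuous_on_mult[OF c1 c2] by (simp add: case_prod_unfold cbox_interval)
  then have "continuous_on U (\<lambda>x. integral (cbox 0 1) (\<lambda>t. H x (g t) * vector_derivative g (at t)))"
    by (rule integral_continuous_on_param)
  then show ?thesis by (simp add: contour_integral_integral cbox_interval)
qed

lemma param_holo:
  fixes H :: "complex \<Rightarrow> complex \<Rightarrow> complex"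
  assumes U: "open U" and r: "0 < r"
    and cont: "continuous_on (U \<times> sphere c r) (\<lambda>(x,y). H x y)"
    and hol: "\<And>y. y \<in> sphere c r \<Longrightarrow> (\<lambda>x. H x y) holomorphic_on U"
  shows "(\<lambda>x. contour_integral (circlepath c r) (H x)) holomorphic_on U"
proof -
  let ?g = "circlepath c r"
  have pi: "path_image ?g = sphere c r" using r by (simp add: path_image_circlepath_nonneg)
  have dg: "continuous_on {0..1} (\<lambda>t. vector_derivative ?g (at t))"
    by (auto simp: vector_derivative_circlepath intro!: continuous_intros)
  have hc: "continuous_on U (\<lambda>x. contour_integral ?g (H x))"
    by (rule param_cont) (use cont pi dg in auto)
  have tri: "contour_integral (linepath a b) (\<lambda>x. contour_integral ?g (H x)) +
             contour_integral (linepath b d) (\<lambda>x. contour_integral ?g (H x)) +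
             contour_integral (linepath d a) (\<lambda>x. contour_integral ?g (H x)) = 0"
    if abd: "convex hull {a, b, d} \<subseteq> U" for a b d
  proof -
    have segs: "closed_segment a b \<subseteq> U" "closed_segment b d \<subseteq> U" "closed_segment d a \<subseteq> U"
      by (rule order_trans[OF segments_subset_convex_hull(1) abd], rule order_trans[OF segments_subset_convex_hull(3) abd],
        rule order_trans[OF segments_subset_convex_hull(5) abd])
    have swap: "contour_integral (linepath x y) (\<lambda>w. contour_integral ?g (H w)) =
          contour_integral ?g (\<lambda>z. contour_integral (linepath x y) (\<lambda>w. H w z))"
      if xy: "closed_segment x y \<subseteq> U" for x y
    proof (rule contour_integral_swap)
      show "continuous_on (path_image (linepath x y) \<times> path_image ?g) (\<lambda>(y1, y2). H y1 y2)"
        using xy pi by (auto intro: continuous_on_subset[OF cont])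
      show "continuous_on {0..1} (\<lambda>t. vector_derivative (linepath x y) (at t))"
        by (auto intro!: continuous_intros)
    qed (use dg in auto)
    have ci: "(\<lambda>z. contour_integral (linepath x y) (\<lambda>w. H w z)) contour_integrable_on ?g"
      if xy: "closed_segment x y \<subseteq> U" for x y
    proof -
      have "continuous_on (path_image ?g) (\<lambda>z. contour_integral (linepath x y) (\<lambda>w. H w z))"
      proof (rule param_cont)
        show "continuous_on (path_image ?g \<times> path_image (linepath x y)) (\<lambda>(z, w). H w z)"
        proof -
          have "continuous_on (path_image ?g \<times> path_image (linepath x y)) (\<lambda>z. (\<lambda>(x,y). H x y) (snd z, fst z))"
            by (rule continuous_on_compose2[OF cont]) (use xy pi in \<open>auto intro!: continuous_intros\<close>)
          then show ?thesis by (simp add: case_prod_unfold)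
        qed
      qed (auto intro!: continuous_intros)
      then show ?thesis using pi
        by (simp add: contour_integrable_continuous_circlepath)
    qed
    have zero: "contour_integral (linepath a b) (\<lambda>w. H w z) + contour_integral (linepath b d) (\<lambda>w. H w z)
               + contour_integral (linepath d a) (\<lambda>w. H w z) = 0" if z: "z \<in> sphere c r" for z
    proof -
      have h: "(\<lambda>w. H w z) holomorphic_on convex hull {a, b, d}"
        using hol[OF z] abd holomorphic_on_subset by blast
      have cint: "(\<lambda>w. H w z) contour_integrable_on linepath x y" if "closed_segment x y \<subseteq> U" for x y
        by (rule contour_integrable_holomorphic_simple[OF hol[OF z] U]) (use that in auto)
      have "contour_integral (linepath a b +++ linepath b d +++ linepath d a) (\<lambda>w. H w z) = 0"
        by (rule contour_integral_unique[OF Cauchy_theorem_triangle[OF h]])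
      then show ?thesis
        using cint[OF segs(1)] cint[OF segs(2)] cint[OF segs(3)]
        by (simp add: contour_integrable_joinI contour_integral_join add.assoc)
    qed
    have "contour_integral (linepath a b) (\<lambda>x. contour_integral ?g (H x)) +
             contour_integral (linepath b d) (\<lambda>x. contour_integral ?g (H x)) +
             contour_integral (linepath d a) (\<lambda>x. contour_integral ?g (H x))
        = contour_integral ?g (\<lambda>z. contour_integral (linepath a b) (\<lambda>w. H w z) + contour_integral (linepath b d) (\<lambda>w. H w z)
               + contour_integral (linepath d a) (\<lambda>w. H w z))"
    proof -
      note s1 = swap[OF segs(1)] and s2 = swap[OF segs(2)] and s3 = swap[OF segs(3)]
      note c1 = ci[OF segs(1)] and c2 = ci[OF segs(2)] and c3 = ci[OF segs(3)]
      show ?thesis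
        unfolding s1 s2 s3 contour_integral_add[OF contour_integrable_add[OF c1 c2] c3, symmetric]
          contour_integral_add[OF c1 c2, symmetric] ..
    qed
    also have "\<dots> = contour_integral ?g (\<lambda>z. 0)"
      by (rule contour_integral_eq) (use zero pi r in auto)
    finally show ?thesis by simp
  qed
  have "(\<lambda>x. contour_integral ?g (H x)) analytic_on U"
    by (rule Morera_triangle[OF hc U]) (use tri in blast)
  then show ?thesis by (simp add: analytic_imp_holomorphic)
qed



definition Gq :: "(complex \<times> complex \<Rightarrow> complex) \<Rightarrow> nat \<Rightarrow> complex \<Rightarrow> complex \<Rightarrow> complex" where
  "Gq F q c2 w1 = (deriv ^^ q) (\<lambda>w2. F (w1, w2)) c2"

lemma pderiv2_Gq: "pderiv2 F p q z = (deriv ^^ p) (Gq F q (snd z)) (fst z)"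
  unfolding pderiv2_def Gq_def ..

lemma cont_pair2:
  assumes "analytic2 F" "S \<subseteq> bidisc"
  shows "continuous_on S (\<lambda>z. F z)"
  using analytic2_cont[OF assms(1)] assms(2) continuous_on_subset by blast

lemma Gq_hol:
  assumes F: "analytic2 F" and c2: "cmod c2 < 1"
  shows "Gq F q c2 holomorphic_on ball 0 1"
proof -
  define r where "r = (1 - cmod c2) / 2"
  have r: "0 < r" using c2 by (simp add: r_def)
  have cb: "cball c2 r \<subseteq> ball 0 1"
  proof
    fix u assume "u \<in> cball c2 r"
    then have "cmod (u - c2) \<le> r" by (simp add: dist_norm norm_minus_commute)
    then have "cmod u \<le> cmod c2 + r" using norm_triangle_ineq2[of u c2] by linarith
    then show "u \<in> ball 0 1" using c2 unfolding r_def mem_ball dist_0_norm by (simp add: field_simps)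
  qed
  define H where "H w1 u = F (w1, u) / (u - c2) ^ Suc q" for w1 u
  have eq: "Gq F q c2 w1 = fact q / (2 * pi * \<i>) * contour_integral (circlepath c2 r) (H w1)"
    if w1: "w1 \<in> ball 0 1" for w1
  proof -
    have hol: "(\<lambda>w2. F (w1, w2)) holomorphic_on ball 0 1"
      using analytic2_hol2[OF F] w1 by simp
    have "((\<lambda>u. F (w1, u) / (u - c2) ^ Suc q) has_contour_integral
            ((2 * pi * \<i>) / (fact q) * (deriv ^^ q) (\<lambda>w2. F (w1, w2)) c2)) (circlepath c2 r)"
    proof (rule Cauchy_has_contour_integral_higher_derivative_circlepath)
      show "continuous_on (cball c2 r) (\<lambda>w2. F (w1, w2))"
        using holomorphic_on_imp_continuous_on[OF hol] cb continuous_on_subset by blast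
      show "(\<lambda>w2. F (w1, w2)) holomorphic_on ball c2 r"
        using hol cb ball_subset_cball holomorphic_on_subset by blast
    qed (use r in simp)
    then have "contour_integral (circlepath c2 r) (H w1) = (2 * pi * \<i>) / (fact q) * Gq F q c2 w1"
      unfolding H_def Gq_def by (rule contour_integral_unique)
    then show ?thesis by simp
  qed
  have "(\<lambda>w1. contour_integral (circlepath c2 r) (H w1)) holomorphic_on ball 0 1"
  proof (rule param_holo)
    show "continuous_on (ball 0 1 \<times> sphere c2 r) (\<lambda>(x, y). H x y)"
    proof -
      have s: "ball 0 1 \<times> sphere c2 r \<subseteq> bidisc"
        using cb sphere_cball by (auto simp: bidisc_def)
      have "continuous_on (ball 0 1 \<times> sphere c2 r) (\<lambda>z. F z / (snd z - c2) ^ Suc q)"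
        using r by (intro continuous_intros cont_pair2[OF F s]) auto
      then show ?thesis by (simp add: H_def case_prod_unfold)
    qed
    show "(\<lambda>x. H x y) holomorphic_on ball 0 1" if y: "y \<in> sphere c2 r" for y
    proof -
      have "cmod y < 1" using y cb sphere_cball by fastforce
      then have "(\<lambda>x. F (x, y)) holomorphic_on ball 0 1" by (rule analytic2_hol1[OF F])
      moreover have "y \<noteq> c2" using y r by auto
      ultimately show ?thesis unfolding H_def by (intro holomorphic_intros) auto
    qed
  qed (use r in auto)
  then have "(\<lambda>w1. fact q / (2 * pi * \<i>) * contour_integral (circlepath c2 r) (H w1)) holomorphic_on ball 0 1"
    by (intro holomorphic_intros)
  then show ?thesis by (rule holomorphic_transform) (simp add: eq)
qed



lemma cball_sub_unit:
  fixes a :: complex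
  assumes "cmod a + s < 1" shows "cball a s \<subseteq> ball 0 1"
proof
  fix u assume "u \<in> cball a s"
  then have "cmod (u - a) \<le> s" by (simp add: dist_norm norm_minus_commute)
  then have "cmod u \<le> cmod a + s" using norm_triangle_ineq2[of u a] by linarith
  then show "u \<in> ball 0 1" using assms by simp
qed

lemma cauchy_coef:
  assumes F: "analytic2 F" and s1: "0 < s1" "cmod (fst c) + s1 < 1"
    and s2: "0 < s2" "cmod (snd c) + s2 < 1"
    and B: "\<And>w. w \<in> torus2 c (s1, s2) \<Longrightarrow> cmod (F w) \<le> B"
  shows "cmod (bcoef F c p q) * s1 ^ p * s2 ^ q \<le> B"
proof -
  have c2: "cmod (snd c) < 1" using s2 by simp
  have step1: "cmod (Gq F q (snd c) w1) \<le> fact q * B / s2 ^ q" if w1: "cmod (fst c - w1) = s1" for w1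
  proof -
    have "w1 \<in> cball (fst c) s1" using w1 by (simp add: dist_norm)
    then have "cmod w1 < 1" using cball_sub_unit[OF s1(2)] by auto
    then have hol: "(\<lambda>w2. F (w1, w2)) holomorphic_on ball 0 1" by (rule analytic2_hol2[OF F])
    have "cmod ((deriv ^^ q) (\<lambda>w2. F (w1, w2)) (snd c)) \<le> fact q * B / s2 ^ q"
    proof (rule Cauchy_inequality)
      show "(\<lambda>w2. F (w1, w2)) holomorphic_on ball (snd c) s2"
        using hol cball_sub_unit[OF s2(2)] ball_subset_cball holomorphic_on_subset by blast
      show "continuous_on (cball (snd c) s2) (\<lambda>w2. F (w1, w2))"
        using holomorphic_on_imp_continuous_on[OF hol] cball_sub_unit[OF s2(2)] continuous_on_subset by blast
      show "cmod (F (w1, x)) \<le> B" if "cmod (snd c - x) = s2" for x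
        by (rule B) (use that w1 in \<open>auto simp: torus2_def norm_minus_commute\<close>)
    qed (use s2 in auto)
    then show ?thesis by (simp add: Gq_def)
  qed
  have hG: "Gq F q (snd c) holomorphic_on ball 0 1" by (rule Gq_hol[OF F c2])
  have "cmod ((deriv ^^ p) (Gq F q (snd c)) (fst c)) \<le> fact p * (fact q * B / s2 ^ q) / s1 ^ p"
  proof (rule Cauchy_inequality)
    show "Gq F q (snd c) holomorphic_on ball (fst c) s1"
      using hG cball_sub_unit[OF s1(2)] ball_subset_cball holomorphic_on_subset by blast
    show "continuous_on (cball (fst c) s1) (Gq F q (snd c))"
      using holomorphic_on_imp_continuous_on[OF hG] cball_sub_unit[OF s1(2)] continuous_on_subset by blast
  qed (use s1 step1 in auto)
  then have le: "cmod (pderiv2 F p q c) \<le> fact p * (fact q * B / s2 ^ q) / s1 ^ p"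
    by (simp add: pderiv2_Gq)
  have pos: "0 < s1 ^ p * s2 ^ q" using s1 s2 by simp
  have "cmod (pderiv2 F p q c) * (s1 ^ p * s2 ^ q) \<le> fact p * fact q * B"
    using le pos s1 s2 by (simp add: field_simps)
  moreover have "cmod (pderiv2 F p q c) = fact p * fact q * cmod (bcoef F c p q)"
    by (simp add: bcoef_def norm_divide norm_mult)
  ultimately have "(fact p * fact q) * (cmod (bcoef F c p q) * s1 ^ p * s2 ^ q) \<le> (fact p * fact q) * B"
    by (simp add: algebra_simps)
  moreover have "(0::real) < fact p * fact q" by simp
  ultimately show ?thesis by (rule mult_left_le_imp_le)
qed

lemma maxmod2:
  assumes F: "analytic2 F" and s1: "0 < s1" "cmod (fst c) + s1 < 1"
    and s2: "0 < s2" "cmod (snd c) + s2 < 1"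
    and B: "\<And>w. w \<in> torus2 c (s1, s2) \<Longrightarrow> cmod (F w) \<le> B"
    and w: "w \<in> cpolydisc c (s1, s2)"
  shows "cmod (F w) \<le> B"
proof -
  have step1: "cmod (F (w1, w2)) \<le> B" if w1: "cmod (w1 - fst c) = s1" and w2: "w2 \<in> cball (snd c) s2" for w1 w2
  proof -
    have "w1 \<in> cball (fst c) s1" using w1 by (simp add: dist_norm norm_minus_commute)
    then have "cmod w1 < 1" using cball_sub_unit[OF s1(2)] by auto
    then have hol: "(\<lambda>w2. F (w1, w2)) holomorphic_on ball 0 1" by (rule analytic2_hol2[OF F])
    show ?thesis
    proof (rule maximum_modulus_frontier[where S = "cball (snd c) s2" and f = "\<lambda>w2. F (w1, w2)"])
      show "(\<lambda>w2. F (w1, w2)) holomorphic_on interior (cball (snd c) s2)"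
        using holomorphic_on_subset[OF hol order_trans[OF ball_subset_cball cball_sub_unit[OF s2(2)]]] by simp
      show "continuous_on (closure (cball (snd c) s2)) (\<lambda>w2. F (w1, w2))"
        using holomorphic_on_imp_continuous_on[OF hol] cball_sub_unit[OF s2(2)] continuous_on_subset by auto
      show "cmod (F (w1, x)) \<le> B" if "x \<in> frontier (cball (snd c) s2)" for x
        by (rule B) (use that w1 s2 in \<open>auto simp: torus2_def dist_norm norm_minus_commute\<close>)
    qed (use w2 in auto)
  qed
  obtain w1 w2 where ww: "w = (w1, w2)" by (cases w)
  have w1: "w1 \<in> cball (fst c) s1" and w2: "w2 \<in> cball (snd c) s2"
    using w ww by (auto simp: cpolydisc_def dist_norm norm_minus_commute)
  have "cmod w2 < 1" using w2 cball_sub_unit[OF s2(2)] by auto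
  then have hol: "(\<lambda>w1. F (w1, w2)) holomorphic_on ball 0 1" by (rule analytic2_hol1[OF F])
  have "cmod (F (w1, w2)) \<le> B"
  proof (rule maximum_modulus_frontier[where S = "cball (fst c) s1" and f = "\<lambda>w1. F (w1, w2)"])
    show "(\<lambda>w1. F (w1, w2)) holomorphic_on interior (cball (fst c) s1)"
      using holomorphic_on_subset[OF hol order_trans[OF ball_subset_cball cball_sub_unit[OF s1(2)]]] by simp
    show "continuous_on (closure (cball (fst c) s1)) (\<lambda>w1. F (w1, w2))"
      using holomorphic_on_imp_continuous_on[OF hol] cball_sub_unit[OF s1(2)] continuous_on_subset by auto
    show "cmod (F (x, w2)) \<le> B" if "x \<in> frontier (cball (fst c) s1)" for x
      by (rule step1) (use that w2 s1 in \<open>auto simp: dist_norm norm_minus_commute\<close>)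
  qed (use w1 in auto)
  then show ?thesis using ww by simp
qed



lemma geom_has_sum:
  fixes y :: real assumes "0 \<le> y" "y < 1"
  shows "((\<lambda>q. y ^ q) has_sum (1 / (1 - y))) UNIV"
  by (rule norm_summable_imp_has_sum) (use assms in \<open>auto intro: summable_geometric geometric_sums\<close>)

lemma prod_geom_abs_summable:
  fixes x y :: real assumes x: "0 \<le> x" "x < 1" and y: "0 \<le> y" "y < 1"
  shows "(\<lambda>z. norm (x ^ fst z * y ^ snd z)) summable_on UNIV"
proof -
  have rows: "((\<lambda>q. norm (x ^ p * y ^ q)) has_sum (x ^ p * (1 / (1 - y)))) UNIV" for p
  proof -
    have "((\<lambda>q. x ^ p * y ^ q) has_sum (x ^ p * (1 / (1 - y)))) UNIV"
      by (rule has_sum_cmult_right[OF geom_has_sum[OF y]])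
    then show ?thesis using x y by simp
  qed
  have col: "((\<lambda>p. norm (x ^ p * (1 / (1 - y)))) has_sum ((1 / (1 - x)) * (1 / (1 - y)))) UNIV"
  proof -
    have "((\<lambda>p. x ^ p * (1 / (1 - y))) has_sum ((1 / (1 - x)) * (1 / (1 - y)))) UNIV"
      by (rule has_sum_cmult_left[OF geom_has_sum[OF x]])
    then show ?thesis using x y by simp
  qed
  have "(\<lambda>z. norm (x ^ fst z * y ^ snd z)) summable_on Sigma UNIV (\<lambda>_. UNIV)"
  proof (subst Infinite_Sum.abs_summable_on_Sigma_iff, intro conjI ballI)
    show "(\<lambda>q. norm (x ^ fst (p, q) * y ^ snd (p, q))) summable_on UNIV" for p
      using rows[of p] by (auto simp: summable_on_def)
    have r: "infsum (\<lambda>q. norm (x ^ fst (p, q) * y ^ snd (p, q))) UNIV = x ^ p * (1 / (1 - y))" for p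
      using rows[of p] by (auto intro!: infsumI)
    have nn: "0 \<le> x ^ p * (1 / (1 - y))" for p using x y by simp
    have "(\<lambda>p. norm (infsum (\<lambda>q. norm (x ^ fst (p, q) * y ^ snd (p, q))) UNIV)) = (\<lambda>p. norm (x ^ p * (1 / (1 - y))))"
      by (simp only: r)
    then show "(\<lambda>p. norm (infsum (\<lambda>q. norm (x ^ fst (p, q) * y ^ snd (p, q))) UNIV)) summable_on UNIV"
      using col by (auto simp: summable_on_def)
  qed
  then show ?thesis by simp
qed

lemma expansion:
  assumes F: "analytic2 F" and u: "cmod (fst c) + cmod u < 1" and v: "cmod (snd c) + cmod v < 1"
  shows "(\<lambda>k. hpoly F c k (u, v)) sums F (fst c + u, snd c + v)"
proof -
  define s1 where "s1 = (1 + cmod u - cmod (fst c)) / 2"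
  define s2 where "s2 = (1 + cmod v - cmod (snd c)) / 2"
  have s1: "cmod u < s1" "cmod (fst c) + s1 < 1" using u unfolding s1_def by (simp_all add: field_simps)
  have s2: "cmod v < s2" "cmod (snd c) + s2 < 1" using v unfolding s2_def by (simp_all add: field_simps)
  have s1p: "0 < s1" using s1(1) norm_ge_zero[of u] by linarith
  have s2p: "0 < s2" using s2(1) norm_ge_zero[of v] by linarith
  define K where "K = cball (fst c) s1 \<times> cball (snd c) s2"
  have Ksub: "K \<subseteq> bidisc"
    using cball_sub_unit[OF s1(2)] cball_sub_unit[OF s2(2)] by (auto simp: K_def bidisc_def)
  have "compact K" by (simp add: K_def compact_Times)
  then have "compact (F ` K)"
    by (rule compact_continuous_image[OF cont_pair2[OF F Ksub]])
  then obtain B where B: "\<And>w. w \<in> K \<Longrightarrow> cmod (F w) \<le> B"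
    using compact_imp_bounded bounded_iff by (metis image_eqI)
  have cb: "cmod (bcoef F c p q) * s1 ^ p * s2 ^ q \<le> B" for p q
  proof (rule cauchy_coef[OF F s1p s1(2) s2p s2(2)])
    show "cmod (F w) \<le> B" if "w \<in> torus2 c (s1, s2)" for w
      by (rule B) (use that in \<open>auto simp: torus2_def K_def dist_norm norm_minus_commute mem_Times_iff\<close>)
  qed
  define x where "x = cmod u / s1"
  define y where "y = cmod v / s2"
  have x: "0 \<le> x" "x < 1" using s1 s1p by (auto simp: x_def)
  have y: "0 \<le> y" "y < 1" using s2 s2p by (auto simp: y_def)
  have ux: "cmod u = s1 * x" using s1p by (simp add: x_def)
  have vy: "cmod v = s2 * y" using s2p by (simp add: y_def)
  define a where "a z = bcoef F c (fst z) (snd z) * u ^ fst z * v ^ snd z" for z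
  have na: "norm (a (p, q)) \<le> B * (x ^ p * y ^ q)" for p q
  proof -
    have "norm (a (p, q)) = (cmod (bcoef F c p q) * s1 ^ p * s2 ^ q) * (x ^ p * y ^ q)"
      by (simp add: a_def norm_mult norm_power ux vy power_mult_distrib)
    also have "\<dots> \<le> B * (x ^ p * y ^ q)"
      by (rule mult_right_mono[OF cb]) (use x y in simp)
    finally show ?thesis .
  qed
  have B0: "0 \<le> B" using na[of 0 0] by (simp add: order_trans[OF norm_ge_zero])
  have gsum: "(\<lambda>z. norm (x ^ fst z * y ^ snd z)) summable_on UNIV"
    by (rule prod_geom_abs_summable[OF x y])
  have "(\<lambda>z. B * norm (x ^ fst z * y ^ snd z)) summable_on UNIV"
    by (rule summable_on_cmult_right[OF gsum])
  then have "(\<lambda>z. norm (a z)) summable_on UNIV"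
  proof (rule Infinite_Sum.abs_summable_on_comparison_test')
    fix z :: "nat \<times> nat"
    show "norm (a z) \<le> B * norm (x ^ fst z * y ^ snd z)"
      using na[of "fst z" "snd z"] x y by simp
  qed
  then have "a summable_on UNIV" by (rule Infinite_Sum.abs_summable_summable)
  then obtain S where S: "(a has_sum S) UNIV" using summable_on_def by blast
  define T where "T q = Gq F q (snd c) (fst c + u) / fact q * v ^ q" for q
  have rowq: "((\<lambda>p. a (p, q)) has_sum T q) UNIV" for q
  proof (rule norm_summable_imp_has_sum)
    have "summable (\<lambda>p. B * y ^ q * x ^ p)"
      using x by (intro summable_mult summable_geometric) simp
    then show "summable (\<lambda>p. norm (a (p, q)))"
      by (rule summable_comparison_test[rotated]) (use na in \<open>auto simp: mult_ac\<close>)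
    have hol: "Gq F q (snd c) holomorphic_on ball (fst c) (1 - cmod (fst c))"
    proof (rule holomorphic_on_subset[OF Gq_hol[OF F]])
      show "cmod (snd c) < 1" using v by (simp add: order_le_less_trans[OF _ v])
      show "ball (fst c) (1 - cmod (fst c)) \<subseteq> ball 0 1"
      proof
        fix w assume "w \<in> ball (fst c) (1 - cmod (fst c))"
        then have "cmod (w - fst c) < 1 - cmod (fst c)" by (simp add: dist_norm norm_minus_commute)
        then show "w \<in> ball 0 1" using norm_triangle_ineq2[of w "fst c"] by simp
      qed
    qed
    have "(\<lambda>p. (deriv ^^ p) (Gq F q (snd c)) (fst c) / fact p * (fst c + u - fst c) ^ p) sums Gq F q (snd c) (fst c + u)"
      by (rule holomorphic_power_series[OF hol]) (use u in \<open>simp add: dist_norm\<close>)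
    then have "(\<lambda>p. (deriv ^^ p) (Gq F q (snd c)) (fst c) / fact p * u ^ p * (v ^ q / fact q)) sums (Gq F q (snd c) (fst c + u) * (v ^ q / fact q))"
      by (intro sums_mult2) simp
    moreover have "(\<lambda>p. (deriv ^^ p) (Gq F q (snd c)) (fst c) / fact p * u ^ p * (v ^ q / fact q)) = (\<lambda>p. a (p, q))"
      by (simp add: a_def bcoef_def pderiv2_Gq field_simps)
    ultimately show "(\<lambda>p. a (p, q)) sums T q" by (simp add: T_def field_simps)
  qed
  have Sswap: "((\<lambda>z. a (snd z, fst z)) has_sum S) (Sigma UNIV (\<lambda>_. UNIV))"
    using S by (subst has_sum_reindex_bij_witness[of _ prod.swap prod.swap]) auto
  have "(T has_sum S) UNIV"
    by (rule has_sum_SigmaD[OF Sswap]) (use rowq in simp)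
  then have TS: "T sums S" by (rule has_sum_imp_sums)
  have "T sums F (fst c + u, snd c + v)"
  proof -
    have cu: "cmod (fst c + u) < 1" using u norm_triangle_ineq[of "fst c" u] by linarith
    have hol: "(\<lambda>w2. F (fst c + u, w2)) holomorphic_on ball (snd c) (1 - cmod (snd c))"
    proof (rule holomorphic_on_subset[OF analytic2_hol2[OF F cu]])
      show "ball (snd c) (1 - cmod (snd c)) \<subseteq> ball 0 1"
      proof
        fix w assume "w \<in> ball (snd c) (1 - cmod (snd c))"
        then have "cmod (w - snd c) < 1 - cmod (snd c)" by (simp add: dist_norm norm_minus_commute)
        then show "w \<in> ball 0 1" using norm_triangle_ineq2[of w "snd c"] by simp
      qed
    qed
    have "(\<lambda>q. (deriv ^^ q) (\<lambda>w2. F (fst c + u, w2)) (snd c) / fact q * (snd c + v - snd c) ^ q) sums F (fst c + u, snd c + v)"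
      by (rule holomorphic_power_series[OF hol]) (use v in \<open>simp add: dist_norm\<close>)
    moreover have "T = (\<lambda>q. (deriv ^^ q) (\<lambda>w2. F (fst c + u, w2)) (snd c) / fact q * (snd c + v - snd c) ^ q)"
      by (simp add: T_def Gq_def fun_eq_iff)
    ultimately show ?thesis by simp
  qed
  with TS have SF: "S = F (fst c + u, snd c + v)" by (rule sums_unique2)
  have Sdiag: "((\<lambda>z. a (snd z, fst z - snd z)) has_sum S) (Sigma UNIV (\<lambda>k. {..k}))"
    using S by (subst has_sum_reindex_bij_witness[of _ "\<lambda>z. (fst z + snd z, fst z)" "\<lambda>z. (snd z, fst z - snd z)"]) auto
  have "((\<lambda>k. \<Sum>j\<le>k. a (j, k - j)) has_sum S) UNIV"
    by (rule has_sum_SigmaD[OF Sdiag]) auto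
  then have "(\<lambda>k. \<Sum>j\<le>k. a (j, k - j)) sums S" by (rule has_sum_imp_sums)
  moreover have "(\<lambda>k. \<Sum>j\<le>k. a (j, k - j)) = (\<lambda>k. hpoly F c k (u, v))"
    by (simp add: a_def hpoly_def)
  ultimately show ?thesis using SF by simp
qed



definition Mval :: "(complex \<times> complex \<Rightarrow> complex) \<Rightarrow> complex \<times> complex \<Rightarrow> real \<times> real \<Rightarrow> nat \<Rightarrow> real" where
  "Mval F z R k = Max ((\<lambda>j1. cmod (bcoef F z j1 (k - j1)) * fst R ^ j1 * snd R ^ (k - j1)) ` {..k})"

lemma Mval_ge:
  assumes "j1 \<le> k" shows "cmod (bcoef F z j1 (k - j1)) * fst R ^ j1 * snd R ^ (k - j1) \<le> Mval F z R k"
  unfolding Mval_def by (rule Max_ge) (simp, rule imageI, use assms in simp)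

lemma Mval_nonneg:
  assumes "0 \<le> fst R" "0 \<le> snd R" shows "0 \<le> Mval F z R k"
proof -
  have "0 \<le> cmod (bcoef F z 0 k) * snd R ^ k" using assms by simp
  then show ?thesis using Mval_ge[of 0 k F z R] by simp
qed
  
lemma torus_bound:
  assumes F: "analytic2 F" and r1: "0 < \<rho>1" "cmod (fst z) + \<rho>1 < 1" and r2: "0 < \<rho>2" "cmod (snd z) + \<rho>2 < 1"
    and mp: "main_polynomial F z (\<rho>1, \<rho>2) k" and kp: "k \<le> p"
    and w: "w \<in> cpolydisc z (\<rho>1, \<rho>2)"
  shows "cmod (F w) \<le> (real p + 2) * Mval F z (\<rho>1, \<rho>2) k"
proof -
  let ?M = "Mval F z (\<rho>1, \<rho>2) k"
  have M0: "0 \<le> ?M" by (rule Mval_nonneg) (use r1 r2 in auto)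
  have tor: "cmod (F w') \<le> (real p + 2) * ?M" if w': "w' \<in> torus2 z (\<rho>1, \<rho>2)" for w'
  proof -
    define u where "u = fst w' - fst z"
    define v where "v = snd w' - snd z"
    have cu: "cmod u = \<rho>1" and cv: "cmod v = \<rho>2" using w' by (auto simp: torus2_def u_def v_def)
    have "(\<lambda>k'. hpoly F z k' (u, v)) sums F (fst z + u, snd z + v)"
      by (rule expansion[OF F]) (use r1 r2 cu cv in auto)
    then have S: "(\<lambda>k'. hpoly F z k' (u, v)) sums F w'" by (simp add: u_def v_def)
    have S1: "(\<lambda>k'. if k' = k then hpoly F z k (u, v) else 0) sums hpoly F z k (u, v)"
      by (rule sums_single)
    have "(\<lambda>k'. hpoly F z k' (u, v) - (if k' = k then hpoly F z k (u, v) else 0)) sums (F w' - hpoly F z k (u, v))"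
      by (rule sums_diff[OF S S1])
    moreover have "(\<lambda>k'. hpoly F z k' (u, v) - (if k' = k then hpoly F z k (u, v) else 0))
        = (\<lambda>k'. if k' = k then 0 else hpoly F z k' (fst w' - fst z, snd w' - snd z))"
      by (auto simp: u_def v_def fun_eq_iff)
    ultimately have "(\<lambda>k'. if k' = k then 0 else hpoly F z k' (fst w' - fst z, snd w' - snd z)) sums (F w' - hpoly F z k (u, v))"
      by simp
    then have eqs: "(\<Sum>k'. if k' = k then 0 else hpoly F z k' (fst w' - fst z, snd w' - snd z)) = F w' - hpoly F z k (u, v)"
      by (rule sums_unique[symmetric])
    have rest: "cmod (F w' - hpoly F z k (u, v)) \<le> 1/2 * ?M"
      using mp w' unfolding main_polynomial_def Mval_def eqs[symmetric] by auto
    have "cmod (hpoly F z k (u, v)) \<le> (\<Sum>j1\<le>k. cmod (bcoef F z j1 (k - j1) * u ^ j1 * v ^ (k - j1)))"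
      unfolding hpoly_def fst_conv snd_conv by (rule norm_sum)
    also have "\<dots> = (\<Sum>j1\<le>k. cmod (bcoef F z j1 (k - j1)) * fst (\<rho>1, \<rho>2) ^ j1 * snd (\<rho>1, \<rho>2) ^ (k - j1))"
      by (simp add: norm_mult norm_power cu cv)
    also have "\<dots> \<le> (\<Sum>j1\<le>k. ?M)"
      by (rule sum_mono) (rule Mval_ge, simp)
    also have "\<dots> = (real k + 1) * ?M" by simp
    finally have hp: "cmod (hpoly F z k (u, v)) \<le> (real k + 1) * ?M" .
    have "cmod (F w') \<le> cmod (F w' - hpoly F z k (u, v)) + cmod (hpoly F z k (u, v))"
      using norm_triangle_sub[of "F w'" "hpoly F z k (u, v)"] by simp
    also have "\<dots> \<le> 1/2 * ?M + (real k + 1) * ?M" using rest hp by (rule add_mono)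
    also have "\<dots> \<le> (real p + 2) * ?M"
    proof -
      have "1/2 + (real k + 1) \<le> real p + 2" using kp by simp
      then have "(1/2 + (real k + 1)) * ?M \<le> (real p + 2) * ?M" using M0 by (rule mult_right_mono)
      then show ?thesis by (simp add: algebra_simps)
    qed
    finally show ?thesis .
  qed
  show ?thesis by (rule maxmod2[OF F r1 r2 tor w])
qed



locale setting =
  fixes \<beta> :: real and l1 l2 :: "complex \<times> complex \<Rightarrow> real" and F :: "complex \<times> complex \<Rightarrow> complex"
    and p :: nat and \<eta> :: real and r1 r2 :: "complex \<times> complex \<Rightarrow> real" and k0 :: "complex \<times> complex \<Rightarrow> nat"
    and A C :: real
  assumes beta: "1 < \<beta>" and F: "analytic2 F" and adm: "admissibleL \<beta> l1 l2"
    and eta: "0 < \<eta>" "\<eta> < \<beta>"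
    and rk: "\<And>z. z \<in> bidisc \<Longrightarrow> \<eta> < r1 z \<and> r1 z < \<beta> \<and> \<eta> < r2 z \<and> r2 z < \<beta> \<and> k0 z \<le> p \<and>
               main_polynomial F z (divL (r1 z, r2 z) l1 l2 z) (k0 z)"
    and A: "0 < A"
    and lam: "\<And>z0 z. z0 \<in> bidisc \<Longrightarrow> z \<in> cpolydisc z0 (divL (\<beta>, \<beta>) l1 l2 z0) \<Longrightarrow>
               A * l1 z0 \<le> l1 z \<and> l1 z \<le> C * l1 z0 \<and> A * l2 z0 \<le> l2 z \<and> l2 z \<le> C * l2 z0"
begin

definition "rho1 z = r1 z / l1 z"
definition "rho2 z = r2 z / l2 z"
definition "M z = Mval F z (rho1 z, rho2 z) (k0 z)"
definition "Q = max 1 (2 * \<beta> * C / (\<eta> * A))"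
definition "K = (real p + 2) * Q ^ p"
definition "N = nat \<lceil>2 * \<beta> * C / \<eta>\<rceil> + 1"

lemma l_pos:
  assumes z: "z \<in> bidisc"
  shows "0 < l1 z" "0 < l2 z" "\<beta> < l1 z * (1 - cmod (fst z))" "\<beta> < l2 z * (1 - cmod (snd z))"
proof -
  have z1: "0 < 1 - cmod (fst z)" and z2: "0 < 1 - cmod (snd z)" using z by (auto simp: bidisc_def)
  have a1: "\<beta> / (1 - cmod (fst z)) < l1 z" and a2: "\<beta> / (1 - cmod (snd z)) < l2 z"
    using adm z unfolding admissibleL_def by auto
  have "0 < \<beta> / (1 - cmod (fst z))" using beta z1 by simp
  then show "0 < l1 z" using a1 by linarith
  have "0 < \<beta> / (1 - cmod (snd z))" using beta z2 by simp
  then show "0 < l2 z" using a2 by linarith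
  show "\<beta> < l1 z * (1 - cmod (fst z))" using a1 z1 by (simp add: pos_divide_less_eq)
  show "\<beta> < l2 z * (1 - cmod (snd z))" using a2 z2 by (simp add: pos_divide_less_eq)
qed

lemma delta_small:
  assumes z: "z \<in> bidisc"
  shows "cmod (fst z) + \<beta> / l1 z < 1" "cmod (snd z) + \<beta> / l2 z < 1" "0 < \<beta> / l1 z" "0 < \<beta> / l2 z"
proof -
  note lp = l_pos[OF z]
  have "\<beta> / l1 z < 1 - cmod (fst z)" using lp(1,3) by (simp add: pos_divide_less_eq mult.commute)
  then show "cmod (fst z) + \<beta> / l1 z < 1" by simp
  have "\<beta> / l2 z < 1 - cmod (snd z)" using lp(2,4) by (simp add: pos_divide_less_eq mult.commute)
  then show "cmod (snd z) + \<beta> / l2 z < 1" by simp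
  show "0 < \<beta> / l1 z" "0 < \<beta> / l2 z" using lp beta by simp_all
qed

lemma rho_props:
  assumes z: "z \<in> bidisc"
  shows "0 < rho1 z" "0 < rho2 z" "rho1 z < \<beta> / l1 z" "rho2 z < \<beta> / l2 z"
    "cmod (fst z) + rho1 z < 1" "cmod (snd z) + rho2 z < 1"
proof -
  note lp = l_pos[OF z] and r = rk[OF z] and d = delta_small[OF z]
  show "0 < rho1 z" "0 < rho2 z" using lp r eta by (auto simp: rho1_def rho2_def)
  show a: "rho1 z < \<beta> / l1 z" using lp r by (simp add: rho1_def divide_strict_right_mono)
  show b: "rho2 z < \<beta> / l2 z" using lp r by (simp add: rho2_def divide_strict_right_mono)
  show "cmod (fst z) + rho1 z < 1" using a d by linarith
  show "cmod (snd z) + rho2 z < 1" using b d by linarith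
qed

lemma cpoly_sub:
  assumes z0: "z0 \<in> bidisc" and w: "w \<in> cpolydisc z0 (divL (\<beta>, \<beta>) l1 l2 z0)"
  shows "w \<in> bidisc"
proof -
  note d = delta_small[OF z0]
  have w1: "cmod (fst w - fst z0) \<le> \<beta> / l1 z0" and w2: "cmod (snd w - snd z0) \<le> \<beta> / l2 z0"
    using w by (auto simp: cpolydisc_def divL_def)
  have "cmod (fst w) \<le> cmod (fst z0) + cmod (fst w - fst z0)" using norm_triangle_ineq2[of "fst w" "fst z0"] by linarith
  moreover have "cmod (snd w) \<le> cmod (snd z0) + cmod (snd w - snd z0)" using norm_triangle_ineq2[of "snd w" "snd z0"] by linarith
  ultimately show ?thesis using w1 w2 d by (auto simp: bidisc_def)
qed

lemma C_ge1: "1 \<le> C"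
proof -
  have z0: "(0, 0) \<in> bidisc" by (simp add: bidisc_def)
  have "(0, 0) \<in> cpolydisc (0, 0) (divL (\<beta>, \<beta>) l1 l2 (0, 0))"
    using delta_small[OF z0] by (auto simp: cpolydisc_def divL_def)
  then have "l1 (0, 0) \<le> C * l1 (0, 0)" using lam[OF z0] by blast
  moreover have "0 < l1 (0, 0)" using l_pos[OF z0] by simp
  ultimately show ?thesis by simp
qed

lemma factA:
  assumes z: "z \<in> bidisc" and w: "w \<in> cpolydisc z (rho1 z, rho2 z)"
  shows "cmod (F w) \<le> (real p + 2) * M z"
proof -
  note rp = rho_props[OF z] and r = rk[OF z]
  have mp: "main_polynomial F z (rho1 z, rho2 z) (k0 z)"
    using r by (simp add: divL_def rho1_def rho2_def)
  show ?thesis unfolding M_def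
    by (rule torus_bound[OF F rp(1) rp(5) rp(2) rp(6) mp _ w]) (use r in simp)
qed

lemma M_nonneg: "z \<in> bidisc \<Longrightarrow> 0 \<le> M z"
  unfolding M_def by (rule Mval_nonneg) (use rho_props in \<open>auto simp: less_imp_le\<close>)

lemma Q_ge1: "1 \<le> Q" by (simp add: Q_def)

lemma K_ge1: "1 \<le> K"
proof -
  have "1 \<le> Q ^ p" using Q_ge1 by simp
  moreover have "1 \<le> real p + 2" by simp
  ultimately have "1 * 1 \<le> (real p + 2) * Q ^ p" by (intro mult_mono) auto
  then show ?thesis by (simp add: K_def)
qed

end



context setting begin

lemma factC:
  assumes z0: "z0 \<in> bidisc" and z: "z \<in> cpolydisc z0 (divL (\<beta>, \<beta>) l1 l2 z0)"
    and z': "z' \<in> cpolydisc z0 (divL (\<beta>, \<beta>) l1 l2 z0)"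
    and d1: "2 * cmod (fst z' - fst z) \<le> rho1 z" and d2: "2 * cmod (snd z' - snd z) \<le> rho2 z"
  shows "M z' \<le> K * M z"
proof -
  have zb: "z \<in> bidisc" and z'b: "z' \<in> bidisc" using cpoly_sub[OF z0] z z' by auto
  note lz = lam[OF z0 z] and lz' = lam[OF z0 z'] and lp0 = l_pos[OF z0] and lpz = l_pos[OF zb] and lpz' = l_pos[OF z'b]
  note rp = rho_props[OF zb] and rz = rk[OF zb] and rz' = rk[OF z'b]
  have C1: "1 \<le> C" by (rule C_ge1)
  define s1 where "s1 = rho1 z / 2"
  define s2 where "s2 = rho2 z / 2"
  have s1e: "2 * s1 = rho1 z" and s2e: "2 * s2 = rho2 z" by (simp_all add: s1_def s2_def)
  have s1p: "0 < s1" and s2p: "0 < s2" using rp by (simp_all add: s1_def s2_def)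
  have e1: "cmod (fst z' - fst z) \<le> s1" using d1 s1e by linarith
  have e2: "cmod (snd z' - snd z) \<le> s2" using d2 s2e by linarith
  have t1: "cmod (fst z') \<le> cmod (fst z) + cmod (fst z' - fst z)"
    using norm_triangle_ineq2[of "fst z'" "fst z"] by linarith
  have t2: "cmod (snd z') \<le> cmod (snd z) + cmod (snd z' - snd z)"
    using norm_triangle_ineq2[of "snd z'" "snd z"] by linarith
  have sm1: "cmod (fst z') + s1 < 1" using t1 e1 s1e rp(5) by linarith
  have sm2: "cmod (snd z') + s2 < 1" using t2 e2 s2e rp(6) by linarith
  have tor: "cmod (F w) \<le> (real p + 2) * M z" if w: "w \<in> torus2 z' (s1, s2)" for w
  proof (rule factA[OF zb])
    have w1: "cmod (fst w - fst z') = s1" and w2: "cmod (snd w - snd z') = s2" using w by (auto simp: torus2_def)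
    have "cmod (fst w - fst z) \<le> cmod (fst w - fst z') + cmod (fst z' - fst z)"
      using norm_triangle_ineq[of "fst w - fst z'" "fst z' - fst z"] by simp
    moreover have "cmod (snd w - snd z) \<le> cmod (snd w - snd z') + cmod (snd z' - snd z)"
      using norm_triangle_ineq[of "snd w - snd z'" "snd z' - snd z"] by simp
    ultimately show "w \<in> cpolydisc z (rho1 z, rho2 z)"
      using w1 w2 e1 e2 s1e s2e by (auto simp: cpolydisc_def)
  qed
  have cb: "cmod (bcoef F z' j1 j2) * s1 ^ j1 * s2 ^ j2 \<le> (real p + 2) * M z" for j1 j2
    by (rule cauchy_coef[OF F s1p sm1 s2p sm2 tor])
  have Cl0: "0 < C * l1 z0" "0 < C * l2 z0" using C1 lp0 by simp_all
  have rq1: "rho1 z' \<le> Q * s1"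
  proof -
    have a: "rho1 z' \<le> \<beta> / (A * l1 z0)" unfolding rho1_def
      by (rule frac_le) (use rz' lz' A lp0 beta in auto)
    have b: "\<eta> / (2 * (C * l1 z0)) \<le> r1 z / (2 * l1 z)"
      by (rule frac_le) (use rz lz lpz eta Cl0 in auto)
    have c: "\<beta> / (A * l1 z0) = (2 * \<beta> * C / (\<eta> * A)) * (\<eta> / (2 * (C * l1 z0)))"
      using A lp0 eta C1 by (simp add: field_simps)
    have "(2 * \<beta> * C / (\<eta> * A)) * (\<eta> / (2 * (C * l1 z0))) \<le> Q * (r1 z / (2 * l1 z))"
      by (rule mult_mono[OF _ b]) (use eta Cl0 in \<open>auto simp: Q_def\<close>)
    then show ?thesis using a c by (simp add: s1_def rho1_def)
  qed
  have rq2: "rho2 z' \<le> Q * s2"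
  proof -
    have a: "rho2 z' \<le> \<beta> / (A * l2 z0)" unfolding rho2_def
      by (rule frac_le) (use rz' lz' A lp0 beta in auto)
    have b: "\<eta> / (2 * (C * l2 z0)) \<le> r2 z / (2 * l2 z)"
      by (rule frac_le) (use rz lz lpz eta Cl0 in auto)
    have c: "\<beta> / (A * l2 z0) = (2 * \<beta> * C / (\<eta> * A)) * (\<eta> / (2 * (C * l2 z0)))"
      using A lp0 eta C1 by (simp add: field_simps)
    have "(2 * \<beta> * C / (\<eta> * A)) * (\<eta> / (2 * (C * l2 z0))) \<le> Q * (r2 z / (2 * l2 z))"
      by (rule mult_mono[OF _ b]) (use eta Cl0 in \<open>auto simp: Q_def\<close>)
    then show ?thesis using a c by (simp add: s2_def rho2_def)
  qed
  note rp' = rho_props[OF z'b]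
  have Mz0: "0 \<le> M z" by (rule M_nonneg[OF zb])
  let ?k = "k0 z'"
  have kp: "?k \<le> p" using rz' by simp
  show ?thesis unfolding M_def[of z'] Mval_def
  proof (rule Max.boundedI)
    show "finite ((\<lambda>j1. cmod (bcoef F z' j1 (?k - j1)) * fst (rho1 z', rho2 z') ^ j1 * snd (rho1 z', rho2 z') ^ (?k - j1)) ` {..?k})"
      by simp
    show "(\<lambda>j1. cmod (bcoef F z' j1 (?k - j1)) * fst (rho1 z', rho2 z') ^ j1 * snd (rho1 z', rho2 z') ^ (?k - j1)) ` {..?k} \<noteq> {}"
      by simp
    fix x assume "x \<in> (\<lambda>j1. cmod (bcoef F z' j1 (?k - j1)) * fst (rho1 z', rho2 z') ^ j1 * snd (rho1 z', rho2 z') ^ (?k - j1)) ` {..?k}"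
    then obtain j1 where j1: "j1 \<le> ?k" and x: "x = cmod (bcoef F z' j1 (?k - j1)) * rho1 z' ^ j1 * rho2 z' ^ (?k - j1)"
      by auto
    have "x \<le> cmod (bcoef F z' j1 (?k - j1)) * (Q * s1) ^ j1 * (Q * s2) ^ (?k - j1)"
      unfolding x
      by (intro mult_mono power_mono rq1 rq2) (use rp' Q_ge1 s1p s2p in auto)
    also have "\<dots> = Q ^ ?k * (cmod (bcoef F z' j1 (?k - j1)) * s1 ^ j1 * s2 ^ (?k - j1))"
    proof -
      have "Q ^ j1 * Q ^ (?k - j1) = Q ^ ?k" using j1 by (simp add: power_add[symmetric])
      then show ?thesis by (simp add: power_mult_distrib algebra_simps)
    qed
    also have "\<dots> \<le> Q ^ ?k * ((real p + 2) * M z)"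
      by (rule mult_left_mono[OF cb]) (use Q_ge1 in simp)
    also have "\<dots> \<le> Q ^ p * ((real p + 2) * M z)"
      by (rule mult_right_mono[OF power_increasing[OF kp Q_ge1]]) (use Mz0 in simp)
    also have "\<dots> = K * M z" by (simp add: K_def)
    finally show "x \<le> K * M z" .
  qed
qed

end



context setting begin

lemma N_props: "1 \<le> N" "2 * \<beta> * C \<le> \<eta> * real N"
proof -
  show "1 \<le> N" by (simp add: N_def)
  have X0: "0 \<le> 2 * \<beta> * C / \<eta>" using beta eta C_ge1 by simp
  have "2 * \<beta> * C / \<eta> \<le> real (nat \<lceil>2 * \<beta> * C / \<eta>\<rceil>)"
    using X0 by linarith
  also have "\<dots> \<le> real N" by (simp add: N_def)
  finally show "2 * \<beta> * C \<le> \<eta> * real N" using eta by (simp add: pos_divide_le_eq mult.commute)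
qed

lemma chain:
  assumes z0: "z0 \<in> bidisc" and w: "w \<in> cpolydisc z0 (divL (\<beta>, \<beta>) l1 l2 z0)"
  shows "cmod (F w) \<le> (real p + 2) * K ^ N * M z0"
proof -
  define t where "t i = real i / real N" for i
  define zi where "zi i = (fst z0 + of_real (t i) * (fst w - fst z0), snd z0 + of_real (t i) * (snd w - snd z0))" for i
  have N1: "1 \<le> N" and NX: "2 * \<beta> * C \<le> \<eta> * real N" by (rule N_props)+
  have Npos: "0 < real N" using N1 by simp
  have w1: "cmod (fst w - fst z0) \<le> \<beta> / l1 z0" and w2: "cmod (snd w - snd z0) \<le> \<beta> / l2 z0"
    using w by (auto simp: cpolydisc_def divL_def)
  note lp0 = l_pos[OF z0]
  have C1: "1 \<le> C" by (rule C_ge1)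
  have pts: "zi i \<in> cpolydisc z0 (divL (\<beta>, \<beta>) l1 l2 z0)" if i: "i \<le> N" for i
  proof -
    have t0: "0 \<le> t i" and t1: "t i \<le> 1" using i Npos by (auto simp: t_def)
    have "cmod (fst (zi i) - fst z0) = t i * cmod (fst w - fst z0)"
      using t0 by (simp add: zi_def norm_mult)
    also have "\<dots> \<le> 1 * cmod (fst w - fst z0)" by (rule mult_right_mono[OF t1]) simp
    finally have a: "cmod (fst (zi i) - fst z0) \<le> \<beta> / l1 z0" using w1 by simp
    have "cmod (snd (zi i) - snd z0) = t i * cmod (snd w - snd z0)"
      using t0 by (simp add: zi_def norm_mult)
    also have "\<dots> \<le> 1 * cmod (snd w - snd z0)" by (rule mult_right_mono[OF t1]) simp
    finally have b: "cmod (snd (zi i) - snd z0) \<le> \<beta> / l2 z0" using w2 by simp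
    show ?thesis using a b by (simp add: cpolydisc_def divL_def)
  qed
  have dif: "t (Suc i) - t i = 1 / real N" for i by (simp add: t_def add_divide_distrib)
  have step1: "2 * cmod (fst (zi (Suc i)) - fst (zi i)) \<le> rho1 (zi i)"
    and step2: "2 * cmod (snd (zi (Suc i)) - snd (zi i)) \<le> rho2 (zi i)" if i: "i < N" for i
  proof -
    have zib: "zi i \<in> bidisc" using cpoly_sub[OF z0 pts] i by simp
    have "i \<le> N" using i by simp
    note lz = lam[OF z0 pts[OF this]] and rz = rk[OF zib] and lpz = l_pos[OF zib]
    have "fst (zi (Suc i)) - fst (zi i) = of_real (t (Suc i) - t i) * (fst w - fst z0)"
      by (simp add: zi_def of_real_diff left_diff_distrib)
    then have fe: "fst (zi (Suc i)) - fst (zi i) = of_real (1 / real N) * (fst w - fst z0)"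
      by (simp only: dif)
    have "snd (zi (Suc i)) - snd (zi i) = of_real (t (Suc i) - t i) * (snd w - snd z0)"
      by (simp add: zi_def of_real_diff left_diff_distrib)
    then have se: "snd (zi (Suc i)) - snd (zi i) = of_real (1 / real N) * (snd w - snd z0)"
      by (simp only: dif)
    have ratio: "2 * \<beta> * C / (\<eta> * real N) \<le> 1"
      using NX eta Npos by (simp add: divide_le_eq_1)
    have r0: "0 \<le> 2 * \<beta> * C / (\<eta> * real N)" using beta C1 eta Npos by simp
    show "2 * cmod (fst (zi (Suc i)) - fst (zi i)) \<le> rho1 (zi i)"
    proof -
      have "2 * cmod (fst (zi (Suc i)) - fst (zi i)) = 2 * cmod (fst w - fst z0) / real N"
        using Npos by (simp add: fe norm_mult norm_divide)
      also have "\<dots> \<le> 2 * (\<beta> / l1 z0) / real N"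
        by (intro divide_right_mono mult_left_mono) (use w1 Npos in auto)
      also have "\<dots> = (2 * \<beta> * C / (\<eta> * real N)) * (\<eta> / (C * l1 z0))"
        using Npos eta C1 lp0 by (simp add: field_simps)
      also have "\<dots> \<le> \<eta> / (C * l1 z0)"
        by (rule mult_left_le_one_le) (use ratio r0 eta C1 lp0 in auto)
      also have "\<dots> \<le> rho1 (zi i)" unfolding rho1_def
        by (rule frac_le) (use rz lz lpz eta in auto)
      finally show ?thesis .
    qed
    show "2 * cmod (snd (zi (Suc i)) - snd (zi i)) \<le> rho2 (zi i)"
    proof -
      have "2 * cmod (snd (zi (Suc i)) - snd (zi i)) = 2 * cmod (snd w - snd z0) / real N"
        using Npos by (simp add: se norm_mult norm_divide)
      also have "\<dots> \<le> 2 * (\<beta> / l2 z0) / real N"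
        by (intro divide_right_mono mult_left_mono) (use w2 Npos in auto)
      also have "\<dots> = (2 * \<beta> * C / (\<eta> * real N)) * (\<eta> / (C * l2 z0))"
        using Npos eta C1 lp0 by (simp add: field_simps)
      also have "\<dots> \<le> \<eta> / (C * l2 z0)"
        by (rule mult_left_le_one_le) (use ratio r0 eta C1 lp0 in auto)
      also have "\<dots> \<le> rho2 (zi i)" unfolding rho2_def
        by (rule frac_le) (use rz lz lpz eta in auto)
      finally show ?thesis .
    qed
  qed
  have K0: "0 \<le> K" using K_ge1 by simp
  have ind: "i \<le> N \<Longrightarrow> M (zi i) \<le> K ^ i * M z0" for i
  proof (induction i)
    case 0
    then show ?case by (simp add: zi_def t_def)
  next
    case (Suc i)
    then have iN: "i < N" by simp
    have "M (zi (Suc i)) \<le> K * M (zi i)"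
      by (rule factC[OF z0 pts pts step1 step2]) (use iN in auto)
    also have "\<dots> \<le> K * (K ^ i * M z0)" using Suc iN by (intro mult_left_mono K0) auto
    finally show ?case by simp
  qed
  define j where "j = N - 1"
  have jN: "Suc j = N" using N1 by (simp add: j_def)
  have zN: "zi N = w" using Npos by (simp add: zi_def t_def)
  have jb: "zi j \<in> bidisc" using cpoly_sub[OF z0 pts] jN by simp
  have "zi N \<in> cpolydisc (zi j) (rho1 (zi j), rho2 (zi j))"
  proof -
    have a: "2 * cmod (fst (zi (Suc j)) - fst (zi j)) \<le> rho1 (zi j)" by (rule step1) (use jN in simp)
    have b: "2 * cmod (snd (zi (Suc j)) - snd (zi j)) \<le> rho2 (zi j)" by (rule step2) (use jN in simp)
    have "cmod (fst (zi (Suc j)) - fst (zi j)) \<le> rho1 (zi j)" using a norm_ge_zero[of "fst (zi (Suc j)) - fst (zi j)"] by linarith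
    moreover have "cmod (snd (zi (Suc j)) - snd (zi j)) \<le> rho2 (zi j)" using b norm_ge_zero[of "snd (zi (Suc j)) - snd (zi j)"] by linarith
    ultimately show ?thesis using jN by (simp add: cpolydisc_def)
  qed
  then have "cmod (F w) \<le> (real p + 2) * M (zi j)" using factA[OF jb] zN by simp
  also have "\<dots> \<le> (real p + 2) * (K ^ j * M z0)"
    by (rule mult_left_mono[OF ind]) (use jN in auto)
  also have "\<dots> \<le> (real p + 2) * (K ^ N * M z0)"
    by (intro mult_left_mono mult_right_mono power_increasing K_ge1 M_nonneg[OF z0]) (use jN in auto)
  finally show ?thesis by (simp add: mult.assoc)
qed

end



context setting begin

lemma nterm_nonneg: "z \<in> bidisc \<Longrightarrow> 0 \<le> nterm F l1 l2 z k1 k2"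
  using l_pos[of z] by (simp add: nterm_def)

lemma bounded: "bounded_L_index_joint F l1 l2"
proof -
  define Kc where "Kc = (real p + 2) * K ^ N"
  have Kc0: "0 < Kc" using K_ge1 by (simp add: Kc_def)
  obtain N' where N': "Kc < \<beta> ^ N'" using real_arch_pow[OF beta] by blast
  define n0 where "n0 = p + N'"
  show ?thesis unfolding bounded_L_index_joint_def
  proof (intro exI[of _ n0] ballI allI)
    fix z0 p1 p2 assume z0: "z0 \<in> bidisc"
    define S where "S = {(k1, k2). k1 + k2 \<le> n0}"
    have finS: "finite S"
    proof (rule finite_subset)
      show "S \<subseteq> {..n0} \<times> {..n0}" by (auto simp: S_def)
    qed simp
    define Mx where "Mx = Max ((\<lambda>(k1, k2). nterm F l1 l2 z0 k1 k2) ` S)"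
    have Mxge: "nterm F l1 l2 z0 k1 k2 \<le> Mx" if "k1 + k2 \<le> n0" for k1 k2
      unfolding Mx_def by (rule Max_ge) (use finS that in \<open>auto simp: S_def intro!: image_eqI[where x="(k1,k2)"]\<close>)
    have Mx0: "0 \<le> Mx" using Mxge[of 0 0] nterm_nonneg[OF z0, of 0 0] by simp
    note lp0 = l_pos[OF z0] and ds = delta_small[OF z0] and r0 = rk[OF z0]
    have main: "nterm F l1 l2 z0 p1 p2 \<le> Mx"
    proof (cases "p1 + p2 \<le> n0")
      case True then show ?thesis by (rule Mxge)
    next
      case False
      let ?k = "k0 z0"
      have kp: "?k \<le> p" using r0 by simp
      have hM: "M z0 \<le> \<beta> ^ p * Mx" unfolding M_def Mval_def
      proof (rule Max.boundedI)
        fix x assume "x \<in> (\<lambda>j1. cmod (bcoef F z0 j1 (?k - j1)) * fst (rho1 z0, rho2 z0) ^ j1 * snd (rho1 z0, rho2 z0) ^ (?k - j1)) ` {..?k}"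
        then obtain j1 where j1: "j1 \<le> ?k" and x: "x = cmod (bcoef F z0 j1 (?k - j1)) * rho1 z0 ^ j1 * rho2 z0 ^ (?k - j1)"
          by auto
        have "x = nterm F l1 l2 z0 j1 (?k - j1) * (r1 z0 ^ j1 * r2 z0 ^ (?k - j1))"
          unfolding x using lp0 by (simp add: bcoef_def nterm_def rho1_def rho2_def norm_divide norm_mult power_divide field_simps)
        also have "\<dots> \<le> nterm F l1 l2 z0 j1 (?k - j1) * (\<beta> ^ j1 * \<beta> ^ (?k - j1))"
          by (intro mult_left_mono mult_mono power_mono nterm_nonneg[OF z0]) (use r0 eta in auto)
        also have "\<dots> = nterm F l1 l2 z0 j1 (?k - j1) * \<beta> ^ ?k"
          using j1 by (simp add: power_add[symmetric])
        also have "\<dots> \<le> Mx * \<beta> ^ p"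
          by (intro mult_mono Mxge power_increasing) (use j1 kp beta Mx0 n0_def in auto)
        finally show "x \<le> \<beta> ^ p * Mx" by (simp add: mult.commute)
      qed simp_all
      have tor: "cmod (F w) \<le> Kc * M z0" if w: "w \<in> torus2 z0 (\<beta> / l1 z0, \<beta> / l2 z0)" for w
      proof -
        have "w \<in> cpolydisc z0 (divL (\<beta>, \<beta>) l1 l2 z0)" using w by (simp add: torus2_def cpolydisc_def divL_def)
        then show ?thesis unfolding Kc_def by (rule chain[OF z0])
      qed
      have hB: "cmod (bcoef F z0 p1 p2) * (\<beta> / l1 z0) ^ p1 * (\<beta> / l2 z0) ^ p2 \<le> Kc * M z0"
        by (rule cauchy_coef[OF F ds(3) ds(1) ds(4) ds(2) tor])
      have eqn: "nterm F l1 l2 z0 p1 p2 * \<beta> ^ (p1 + p2) = cmod (bcoef F z0 p1 p2) * (\<beta> / l1 z0) ^ p1 * (\<beta> / l2 z0) ^ p2"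
        using lp0 by (simp add: bcoef_def nterm_def norm_divide norm_mult power_divide power_add field_simps)
      have "nterm F l1 l2 z0 p1 p2 * (Kc * \<beta> ^ p) \<le> nterm F l1 l2 z0 p1 p2 * \<beta> ^ (p1 + p2)"
      proof (rule mult_left_mono[OF _ nterm_nonneg[OF z0]])
        have "Kc * \<beta> ^ p \<le> \<beta> ^ N' * \<beta> ^ p" using N' beta by (intro mult_right_mono) auto
        also have "\<dots> = \<beta> ^ (p + N')" by (simp add: power_add)
        also have "\<dots> \<le> \<beta> ^ (p1 + p2)" using False beta by (intro power_increasing) (auto simp: n0_def)
        finally show "Kc * \<beta> ^ p \<le> \<beta> ^ (p1 + p2)" .
      qed
      also have "\<dots> \<le> Kc * M z0" using eqn hB by simp
      also have "\<dots> \<le> Kc * (\<beta> ^ p * Mx)" using hM Kc0 by (intro mult_left_mono) auto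
      finally have "nterm F l1 l2 z0 p1 p2 * (Kc * \<beta> ^ p) \<le> Mx * (Kc * \<beta> ^ p)" by (simp add: algebra_simps)
      moreover have "0 < Kc * \<beta> ^ p" using Kc0 beta by simp
      ultimately show ?thesis by (rule mult_right_le_imp_le)
    qed
    show "nterm F l1 l2 z0 p1 p2 \<le> Max ((\<lambda>(k1, k2). nterm F l1 l2 z0 k1 k2) ` {(k1, k2). k1 + k2 \<le> n0})"
      using main by (simp add: Mx_def S_def)
  qed
qed

end



lemma ereal_bounds:
  assumes "0 < a" "a \<le> b" "b < \<infinity>"
  shows "\<exists>A C. 0 < A \<and> (\<forall>x. a \<le> ereal x \<longrightarrow> A \<le> x) \<and> (\<forall>x. ereal x \<le> b \<longrightarrow> x \<le> C)"
proof -
  obtain ra where ra: "a = ereal ra" using assms by (cases a) auto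
  obtain rb where rb: "b = ereal rb" using assms by (cases b) auto
  show ?thesis using assms ra rb by (intro exI[of _ ra] exI[of _ rb]) auto
qed

lemma adm_pos:
  assumes "admissibleL \<beta> l1 l2" "1 < \<beta>" "z \<in> bidisc"
  shows "0 < l1 z" "0 < l2 z"
proof -
  have z1: "0 < 1 - cmod (fst z)" and z2: "0 < 1 - cmod (snd z)" using assms(3) by (auto simp: bidisc_def)
  have a1: "\<beta> / (1 - cmod (fst z)) < l1 z" and a2: "\<beta> / (1 - cmod (snd z)) < l2 z"
    using assms unfolding admissibleL_def by auto
  have "0 < \<beta> / (1 - cmod (fst z))" using assms(2) z1 by simp
  then show "0 < l1 z" using a1 by linarith
  have "0 < \<beta> / (1 - cmod (snd z))" using assms(2) z2 by simp
  then show "0 < l2 z" using a2 by linarith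
qed

lemma lambda_bounds:
  assumes "z0 \<in> bidisc" "z \<in> cpolydisc z0 (divL R l1 l2 z0)"
  shows "lambda1 l l1 l2 R \<le> ereal (l z / l z0)" "ereal (l z / l z0) \<le> lambda2 l l1 l2 R"
proof -
  show "lambda1 l l1 l2 R \<le> ereal (l z / l z0)" unfolding lambda1_def
    by (rule INF_lower2[OF assms(1)]) (rule INF_lower[OF assms(2), of "\<lambda>z. ereal (l z / l z0)"])
  show "ereal (l z / l z0) \<le> lambda2 l l1 l2 R" unfolding lambda2_def
    by (rule SUP_upper2[OF assms(1)]) (rule SUP_upper[OF assms(2), of "\<lambda>z. ereal (l z / l z0)"])
qed

theorem theorem9:
  fixes \<beta> :: real and l1 l2 :: "complex \<times> complex \<Rightarrow> real"
    and F :: "complex \<times> complex \<Rightarrow> complex"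
  assumes "\<beta> > 1"
    and "Q2 \<beta> l1 l2"
    and "analytic2 F"
    and "\<exists>p::nat. \<forall>d. 0 < d \<and> d \<le> \<beta> \<longrightarrow>
           (\<exists>\<eta>. 0 < \<eta> \<and> \<eta> < d \<and>
             (\<forall>z0\<in>bidisc. \<exists>r1 r2 (k0::nat).
                \<eta> < r1 \<and> r1 < d \<and> \<eta> < r2 \<and> r2 < d \<and> k0 \<le> p \<and>
                main_polynomial F z0 (divL (r1, r2) l1 l2 z0) k0))"
  shows "bounded_L_index_joint F l1 l2"
proof -
  have beta: "1 < \<beta>" by fact
  have adm: "admissibleL \<beta> l1 l2" using assms(2) by (simp add: Q2_def)
  have lamQ: "\<forall>l\<in>{l1, l2}. 0 < lambda1 l l1 l2 (\<beta>, \<beta>) \<and> lambda1 l l1 l2 (\<beta>, \<beta>) \<le> lambda2 l l1 l2 (\<beta>, \<beta>) \<and>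
            lambda2 l l1 l2 (\<beta>, \<beta>) < \<infinity>"
    using assms(2) beta unfolding Q2_def by auto
  obtain A1 C1 where A1: "0 < A1" and A1l: "\<And>x. lambda1 l1 l1 l2 (\<beta>, \<beta>) \<le> ereal x \<Longrightarrow> A1 \<le> x"
      and C1l: "\<And>x. ereal x \<le> lambda2 l1 l1 l2 (\<beta>, \<beta>) \<Longrightarrow> x \<le> C1"
    using ereal_bounds[of "lambda1 l1 l1 l2 (\<beta>, \<beta>)" "lambda2 l1 l1 l2 (\<beta>, \<beta>)"] lamQ by auto
  obtain A2 C2 where A2: "0 < A2" and A2l: "\<And>x. lambda1 l2 l1 l2 (\<beta>, \<beta>) \<le> ereal x \<Longrightarrow> A2 \<le> x"
      and C2l: "\<And>x. ereal x \<le> lambda2 l2 l1 l2 (\<beta>, \<beta>) \<Longrightarrow> x \<le> C2"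
    using ereal_bounds[of "lambda1 l2 l1 l2 (\<beta>, \<beta>)" "lambda2 l2 l1 l2 (\<beta>, \<beta>)"] lamQ by auto
  define A where "A = min A1 A2"
  define C where "C = max C1 C2"
  have A: "0 < A" using A1 A2 by (simp add: A_def)
  have lam: "A * l1 z0 \<le> l1 z \<and> l1 z \<le> C * l1 z0 \<and> A * l2 z0 \<le> l2 z \<and> l2 z \<le> C * l2 z0"
    if z0: "z0 \<in> bidisc" and z: "z \<in> cpolydisc z0 (divL (\<beta>, \<beta>) l1 l2 z0)" for z0 z
  proof -
    have p1: "0 < l1 z0" and p2: "0 < l2 z0" using adm_pos[OF adm beta z0] by auto
    have a1: "A1 \<le> l1 z / l1 z0" by (rule A1l[OF lambda_bounds(1)[OF z0 z]])
    have a2: "A2 \<le> l2 z / l2 z0" by (rule A2l[OF lambda_bounds(1)[OF z0 z]])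
    have c1: "l1 z / l1 z0 \<le> C1" by (rule C1l[OF lambda_bounds(2)[OF z0 z]])
    have c2: "l2 z / l2 z0 \<le> C2" by (rule C2l[OF lambda_bounds(2)[OF z0 z]])
    have "A * l1 z0 \<le> A1 * l1 z0" using p1 by (intro mult_right_mono) (auto simp: A_def)
    also have "\<dots> \<le> l1 z" using a1 p1 by (simp add: pos_le_divide_eq)
    finally have x1: "A * l1 z0 \<le> l1 z" .
    have "A * l2 z0 \<le> A2 * l2 z0" using p2 by (intro mult_right_mono) (auto simp: A_def)
    also have "\<dots> \<le> l2 z" using a2 p2 by (simp add: pos_le_divide_eq)
    finally have x2: "A * l2 z0 \<le> l2 z" .
    have "l1 z \<le> C1 * l1 z0" using c1 p1 by (simp add: pos_divide_le_eq)
    also have "\<dots> \<le> C * l1 z0" using p1 by (intro mult_right_mono) (auto simp: C_def)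
    finally have y1: "l1 z \<le> C * l1 z0" .
    have "l2 z \<le> C2 * l2 z0" using c2 p2 by (simp add: pos_divide_le_eq)
    also have "\<dots> \<le> C * l2 z0" using p2 by (intro mult_right_mono) (auto simp: C_def)
    finally have y2: "l2 z \<le> C * l2 z0" .
    show ?thesis using x1 x2 y1 y2 by blast
  qed
  obtain p :: nat where hp: "\<forall>d. 0 < d \<and> d \<le> \<beta> \<longrightarrow>
           (\<exists>\<eta>. 0 < \<eta> \<and> \<eta> < d \<and>
             (\<forall>z0\<in>bidisc. \<exists>r1 r2 (k0::nat).
                \<eta> < r1 \<and> r1 < d \<and> \<eta> < r2 \<and> r2 < d \<and> k0 \<le> p \<and>
                main_polynomial F z0 (divL (r1, r2) l1 l2 z0) k0))"
    using assms(4) by blast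
  obtain \<eta> where eta: "0 < \<eta>" "\<eta> < \<beta>" and H: "\<forall>z0\<in>bidisc. \<exists>r1 r2 (k0::nat).
                \<eta> < r1 \<and> r1 < \<beta> \<and> \<eta> < r2 \<and> r2 < \<beta> \<and> k0 \<le> p \<and>
                main_polynomial F z0 (divL (r1, r2) l1 l2 z0) k0"
    using hp[rule_format, of \<beta>] beta by auto
  have "\<forall>z0\<in>bidisc. \<exists>t. \<eta> < fst t \<and> fst t < \<beta> \<and> \<eta> < fst (snd t) \<and> fst (snd t) < \<beta> \<and> snd (snd t) \<le> p \<and>
                main_polynomial F z0 (divL (fst t, fst (snd t)) l1 l2 z0) (snd (snd t))"
  proof
    fix z0 assume "z0 \<in> bidisc"
    then obtain r1 r2 k0 where "\<eta> < r1 \<and> r1 < \<beta> \<and> \<eta> < r2 \<and> r2 < \<beta> \<and> k0 \<le> p \<and>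
                main_polynomial F z0 (divL (r1, r2) l1 l2 z0) k0" using H by blast
    then show "\<exists>t. \<eta> < fst t \<and> fst t < \<beta> \<and> \<eta> < fst (snd t) \<and> fst (snd t) < \<beta> \<and> snd (snd t) \<le> p \<and>
                main_polynomial F z0 (divL (fst t, fst (snd t)) l1 l2 z0) (snd (snd t))"
      by (intro exI[of _ "(r1, r2, k0)"]) simp
  qed
  then obtain f where f: "\<And>z0. z0 \<in> bidisc \<Longrightarrow> \<eta> < fst (f z0) \<and> fst (f z0) < \<beta> \<and> \<eta> < fst (snd (f z0)) \<and>
         fst (snd (f z0)) < \<beta> \<and> snd (snd (f z0)) \<le> p \<and>
         main_polynomial F z0 (divL (fst (f z0), fst (snd (f z0))) l1 l2 z0) (snd (snd (f z0)))"
    by (metis bchoice)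
  interpret S: setting \<beta> l1 l2 F p \<eta> "\<lambda>z. fst (f z)" "\<lambda>z. fst (snd (f z))" "\<lambda>z. snd (snd (f z))" A C
  proof
    show "\<And>z0 z. z0 \<in> bidisc \<Longrightarrow> z \<in> cpolydisc z0 (divL (\<beta>, \<beta>) l1 l2 z0) \<Longrightarrow>
               A * l1 z0 \<le> l1 z \<and> l1 z \<le> C * l1 z0 \<and> A * l2 z0 \<le> l2 z \<and> l2 z \<le> C * l2 z0"
      by (rule lam)
  qed (use beta assms(3) adm eta f A in auto)
  show ?thesis by (rule S.bounded)
qed


end
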